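(* Let $n>5f$. The convergence algorithm described in the context, executed by $n$ robots of which at most $f$ are Byzantine, in the CORDA model under a fully asynchronous scheduler, is cautious.
   Context: Setting: $n$ robots on the real line, of which at most $f$ are Byzantine (arbitrary behaviour, positions chosen by an adversary). Robots are anonymous, oblivious, have no common orientation, and have unlimited visibility with strong multiplicity detection. Each correct robot runs Look–Compute–Move cycles. In a Move, the adversary may stop robot $i$ only after it has moved at least $\delta_i>0$ toward its destination (or reached it). In the CORDA model, phases of different robots interleave arbitrarily, so computations may use outdated snapshots. A fully asynchronous scheduler only guarantees that every robot is activated infinitely often. Algorithm: with snapshot sorted $P_1\le\dots\le P_n$ and own position $x_i$, robot $i$ is elected iff $x_i\le P_{f+1}$ or $x_i\ge P_{n-f}$. If elected, it moves toward the midpoint of $\min(x_i,P_{2f+1})$ and $\max(x_i,P_{n-2f})$. This midpoint is the center of $trim^i_{2f}(P)$, the multiset obtained by removing, among the $2f$ smallest positions, those smaller than $x_i$, and, among the $2f$ largest positions, those larger than $x_i$. Cautious: let $D_i(t)$ be the last destination computed by robot $i$ at or before $t$, and $U^i(t)$ the positions of correct robots in $i$'s last observation. The algorithm is cautious if both of the following hold: - $D_i(t)\in[\min U^i(t),\max U^i(t)]$ for every correct $i$ and every $t$; - whenever the correct robots are not all at one point at time $t$, some correct robot $i$ at some time $t'>t$ has $D_i(t')$ different from its position. *)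

theory Defs
  imports "HOL-Analysis.Analysis"
begin

text \<open>
  Robots are indexed by \<open>{..<n}\<close>; \<open>B\<close> is the set of Byzantine robots.
  \<open>pos t j\<close> is the position of robot \<open>j\<close> at time \<open>t\<close> (Byzantine positions are arbitrary).
  For a correct robot \<open>i\<close>, its \<open>k\<close>-th cycle starts with an (instantaneous) Look at time
  \<open>L i k\<close>, whose snapshot determines the destination; its Move ends at time \<open>E i k\<close>.
  Between \<open>L i k\<close> and \<open>E i k\<close> the robot may wait (Compute delay) and moves continuously
  and monotonically toward its destination; between \<open>E i k\<close> and \<open>L i (k+1)\<close> it stays still.
\<close>

text \<open>The \<open>m\<close>-th smallest element (1-based) of a list of reals.\<close>
definition kth :: "real list \<Rightarrow> nat \<Rightarrow> real" where
  "kth xs m = sort xs ! (m - 1)"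

text \<open>The algorithm: snapshot \<open>P\<close> (all \<open>n\<close> positions) and own position \<open>x\<close>.
  Non-elected robots compute their own position as destination (null move).\<close>
definition dest :: "nat \<Rightarrow> nat \<Rightarrow> real list \<Rightarrow> real \<Rightarrow> real" where
  "dest n f P x =
     (if x \<le> kth P (f + 1) \<or> x \<ge> kth P (n - f)
      then (min x (kth P (2 * f + 1)) + max x (kth P (n - 2 * f))) / 2
      else x)"

definition snapshot :: "nat \<Rightarrow> (real \<Rightarrow> nat \<Rightarrow> real) \<Rightarrow> real \<Rightarrow> real list" where
  "snapshot n pos t = map (pos t) [0..<n]"

definition cycle_dest ::
  "nat \<Rightarrow> nat \<Rightarrow> (real \<Rightarrow> nat \<Rightarrow> real) \<Rightarrow> (nat \<Rightarrow> nat \<Rightarrow> real) \<Rightarrow> nat \<Rightarrow> nat \<Rightarrow> real" where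
  "cycle_dest n f pos L i k = dest n f (snapshot n pos (L i k)) (pos (L i k) i)"

definition corda_execution ::
  "nat \<Rightarrow> nat \<Rightarrow> nat set \<Rightarrow> (nat \<Rightarrow> real) \<Rightarrow> (real \<Rightarrow> nat \<Rightarrow> real)
   \<Rightarrow> (nat \<Rightarrow> nat \<Rightarrow> real) \<Rightarrow> (nat \<Rightarrow> nat \<Rightarrow> real) \<Rightarrow> bool" where
  "corda_execution n f B \<delta> pos L E \<longleftrightarrow>
     B \<subseteq> {..<n} \<and> card B \<le> f \<and>
     (\<forall>i \<in> {..<n} - B.
        \<delta> i > 0 \<and>
        0 \<le> L i 0 \<and>
        (\<forall>k. L i k \<le> E i k \<and> E i k \<le> L i (Suc k) \<and> L i k < L i (Suc k)) \<and>
        \<comment> \<open>fairness: infinitely many activations, at unbounded times\<close>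
        (\<forall>T. \<exists>k. T < L i k) \<and>
        \<comment> \<open>before the first Look the robot does not move\<close>
        (\<forall>t \<in> {0..L i 0}. pos t i = pos 0 i) \<and>
        (\<forall>k. let s = pos (L i k) i; d = cycle_dest n f pos L i k in
           \<comment> \<open>move phase: continuous, monotone toward the destination, no overshoot\<close>
           continuous_on {L i k..E i k} (\<lambda>t. pos t i) \<and>
           (\<forall>t \<in> {L i k..E i k}. min s d \<le> pos t i \<and> pos t i \<le> max s d) \<and>
           (\<forall>t1 t2. L i k \<le> t1 \<and> t1 \<le> t2 \<and> t2 \<le> E i k \<longrightarrow>
                     \<bar>d - pos t2 i\<bar> \<le> \<bar>d - pos t1 i\<bar>) \<and>
           \<comment> \<open>the adversary stops the robot only after it moved at least \<open>\<delta> i\<close> or reached \<open>d\<close>\<close>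
           (pos (E i k) i = d \<or> \<bar>pos (E i k) i - s\<bar> \<ge> \<delta> i) \<and>
           \<comment> \<open>idle between the end of the Move and the next Look\<close>
           (\<forall>t \<in> {E i k..L i (Suc k)}. pos t i = pos (E i k) i)))"

definition last_look :: "(nat \<Rightarrow> nat \<Rightarrow> real) \<Rightarrow> nat \<Rightarrow> real \<Rightarrow> nat" where
  "last_look L i t = (GREATEST k. L i k \<le> t)"

definition Dest ::
  "nat \<Rightarrow> nat \<Rightarrow> (real \<Rightarrow> nat \<Rightarrow> real) \<Rightarrow> (nat \<Rightarrow> nat \<Rightarrow> real) \<Rightarrow> nat \<Rightarrow> real \<Rightarrow> real" where
  "Dest n f pos L i t = cycle_dest n f pos L i (last_look L i t)"

definition Obs ::
  "nat \<Rightarrow> nat set \<Rightarrow> (real \<Rightarrow> nat \<Rightarrow> real) \<Rightarrow> (nat \<Rightarrow> nat \<Rightarrow> real) \<Rightarrow> nat \<Rightarrow> real \<Rightarrow> real set" where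
  "Obs n B pos L i t = (\<lambda>j. pos (L i (last_look L i t)) j) ` ({..<n} - B)"

definition cautious ::
  "nat \<Rightarrow> nat \<Rightarrow> nat set \<Rightarrow> (real \<Rightarrow> nat \<Rightarrow> real) \<Rightarrow> (nat \<Rightarrow> nat \<Rightarrow> real) \<Rightarrow> bool" where
  "cautious n f B pos L \<longleftrightarrow>
     (\<forall>i \<in> {..<n} - B. \<forall>t. L i 0 \<le> t \<longrightarrow>
        Dest n f pos L i t \<in> {Min (Obs n B pos L i t) .. Max (Obs n B pos L i t)}) \<and>
     (\<forall>t \<ge> 0. (\<exists>j \<in> {..<n} - B. \<exists>j' \<in> {..<n} - B. pos t j \<noteq> pos t j') \<longrightarrow>
        (\<exists>i \<in> {..<n} - B. \<exists>t' > t. L i 0 \<le> t' \<and> Dest n f pos L i t' \<noteq> pos t' i))"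

end

theory Submission
  imports Defs
begin

lemma const_countable:
  fixes g :: "real \<Rightarrow> real"
  assumes "connected S" "continuous_on S g" "countable (g ` S)" "a \<in> S" "b \<in> S"
  shows "g a = g b"
  by (metis assms connected_continuous_image connected_uncountable imageI)

lemma sorted_nth_down:
  fixes ys :: "real list"
  assumes "sorted ys" "i < length ys" "\<And>x y. x \<le> y \<Longrightarrow> Q y \<Longrightarrow> Q x"
  shows "Q (ys!i) \<longleftrightarrow> i < length (filter Q ys)"
  using assms
proof (induction ys arbitrary: i)
  case Nil then show ?case by simp
next
  case (Cons y ys)
  show ?case
  proof (cases "Q y")
    case True
    show ?thesis
    proof (cases i)
      case 0 then show ?thesis using True by simp
    next
      case (Suc i') then show ?thesis using Cons True by auto
    qed
  next
    case False
    have all: "\<forall>z\<in>set (y#ys). \<not> Q z" using Cons.prems(1) Cons.prems(3) False by auto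
    then have "filter Q ys = []" by (simp add: filter_empty_conv)
    moreover have "\<not> Q ((y#ys)!i)" using all Cons.prems(2) nth_mem by blast
    ultimately show ?thesis using False by simp
  qed
qed

lemma kth_count:
  fixes pos :: "real \<Rightarrow> nat \<Rightarrow> real"
  assumes "1 \<le> m" "m \<le> n" "\<And>x y. x \<le> y \<Longrightarrow> Q y \<Longrightarrow> Q x"
  shows "Q (kth (snapshot n pos s) m) \<longleftrightarrow> m \<le> card {j. j < n \<and> Q (pos s j)}"
proof -
  let ?P = "snapshot n pos s"
  have len: "length ?P = n" by (simp add: snapshot_def)
  have "Q (kth ?P m) \<longleftrightarrow> m - 1 < length (filter Q (sort ?P))"
    unfolding kth_def using sorted_nth_down[of "sort ?P" "m-1" Q] assms len by simp
  also have "length (filter Q (sort ?P)) = length (filter Q ?P)" by (simp add: filter_sort)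
  also have "\<dots> = card {j. j < n \<and> Q (pos s j)}"
    unfolding length_filter_conv_card len by (intro arg_cong[where f=card] Collect_cong) (auto simp: snapshot_def)
  finally show ?thesis using assms by auto
qed

lemma dest_in_range:
  fixes pos :: "real \<Rightarrow> nat \<Rightarrow> real"
  assumes n: "2*f < n" and C: "C \<subseteq> {..<n}" and cb: "card ({..<n} - C) \<le> f" and i: "i \<in> C"
  shows "dest n f (snapshot n pos s) (pos s i) \<in> {Min (pos s ` C) .. Max (pos s ` C)}"
proof -
  let ?P = "snapshot n pos s"
  define lo where "lo = Min (pos s ` C)"
  define hi where "hi = Max (pos s ` C)"
  have fC: "finite C" using C finite_subset by blast
  have x: "lo \<le> pos s i" "pos s i \<le> hi" unfolding lo_def hi_def using fC i by auto
  have cardC: "card {..<n} = card C + card ({..<n} - C)"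
    using C fC by (metis card_Diff_subset card_lessThan finite_lessThan le_add_diff_inverse card_mono)
  have a: "lo \<le> kth ?P (2*f+1)"
  proof (rule ccontr)
    assume "\<not> ?thesis"
    then have "kth ?P (2*f+1) < lo" by simp
    then have "2*f+1 \<le> card {j. j < n \<and> pos s j < lo}"
      using kth_count[of "2*f+1" n "\<lambda>y. y < lo" pos s] n by auto
    moreover have "\<forall>j\<in>C. lo \<le> pos s j" unfolding lo_def using fC by auto
    then have "{j. j < n \<and> pos s j < lo} \<subseteq> {..<n} - C" by force
    then have "card {j. j < n \<and> pos s j < lo} \<le> f"
      using cb by (meson card_mono finite_Diff finite_lessThan le_trans)
    ultimately show False by simp
  qed
  have b: "kth ?P (n - 2*f) \<le> hi"
  proof -
    have "C \<subseteq> {j. j < n \<and> pos s j \<le> hi}" unfolding hi_def using fC C by auto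
    then have "card C \<le> card {j. j < n \<and> pos s j \<le> hi}" by (intro card_mono) auto
    then have "n - 2*f \<le> card {j. j < n \<and> pos s j \<le> hi}" using cardC cb by simp
    then show ?thesis using kth_count[of "n - 2*f" n "\<lambda>y. y \<le> hi" pos s] n by auto
  qed
  show ?thesis
    unfolding dest_def lo_def[symmetric] hi_def[symmetric] using x a b
    by (auto simp: min_def max_def)
qed

lemma counting:
  fixes pos :: "real \<Rightarrow> nat \<Rightarrow> real" and c :: "nat \<Rightarrow> real"
  assumes n: "5*f < n" and C: "C \<subseteq> {..<n}" and cb: "card ({..<n} - C) \<le> f"
    and s1: "\<forall>j\<in>C. pos s1 j = c j" and s2: "\<forall>j\<in>C. pos s2 j = c j"
    and mdef: "m = Min (c ` C)" and Mdef: "M = Max (c ` C)" and mM: "m < M"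
    and i1: "i1 \<in> C" "c i1 = m" and i2: "i2 \<in> C" "c i2 = M"
    and d1: "dest n f (snapshot n pos s1) m = m"
    and d2: "dest n f (snapshot n pos s2) M = M"
  shows False
proof -
  define Bc where "Bc = {..<n} - C"
  define b where "b = card Bc"
  have fC: "finite C" using C finite_subset by blast
  have fB: "finite Bc" unfolding Bc_def by simp
  have cardC: "card C = n - b"
    unfolding b_def Bc_def using C fC card_mono[OF _ C] by (simp add: card_Diff_subset)
  have bf: "b \<le> f" using cb b_def Bc_def by simp
  have cm: "\<forall>j\<in>C. m \<le> c j" unfolding mdef using fC by auto
  have cM: "\<forall>j\<in>C. c j \<le> M" unfolding Mdef using fC by auto
  define A where "A = {j\<in>C. c j = m}"
  define Z where "Z = {j\<in>C. c j = M}"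
  have fA: "finite A" "finite Z" using fC unfolding A_def Z_def by auto
  have AZ: "card A + card Z \<le> card C"
  proof -
    have "A \<inter> Z = {}" using mM unfolding A_def Z_def by auto
    then have "card (A \<union> Z) = card A + card Z" using fA card_Un_disjoint by blast
    moreover have "card (A \<union> Z) \<le> card C" using fC by (intro card_mono) (auto simp: A_def Z_def)
    ultimately show ?thesis by simp
  qed
  let ?P1 = "snapshot n pos s1"
  let ?P2 = "snapshot n pos s2"
  have below1: "\<And>k. 1 \<le> k \<Longrightarrow> k \<le> n \<Longrightarrow> k > f \<Longrightarrow> m \<le> kth ?P1 k"
  proof (rule ccontr)
    fix k assume k: "1 \<le> k" "k \<le> n" "k > f" "\<not> m \<le> kth ?P1 k"
    then have "k \<le> card {j. j < n \<and> pos s1 j < m}"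
      using kth_count[of k n "\<lambda>y. y < m" pos s1] by auto
    moreover have "{j. j < n \<and> pos s1 j < m} \<subseteq> Bc" unfolding Bc_def using s1 cm by force
    then have "card {j. j < n \<and> pos s1 j < m} \<le> b" unfolding b_def using fB card_mono by blast
    ultimately show False using k bf by simp
  qed
  have e1: "m \<le> kth ?P1 (f+1)" using below1[of "f+1"] n by simp
  have g1: "m \<le> kth ?P1 (2*f+1)" using below1[of "2*f+1"] n by simp
  have "max m (kth ?P1 (n - 2*f)) = m" using d1 e1 g1 unfolding dest_def by (auto simp: min_def)
  then have "kth ?P1 (n - 2*f) \<le> m" by (simp add: max_def split: if_splits)
  then have h1: "n - 2*f \<le> card {j. j < n \<and> pos s1 j \<le> m}"
    using kth_count[of "n-2*f" n "\<lambda>y. y \<le> m" pos s1] n by auto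
  have "{j. j < n \<and> pos s1 j \<le> m} \<subseteq> Bc \<union> A"
    unfolding Bc_def A_def using s1 cm by force
  then have "card {j. j < n \<and> pos s1 j \<le> m} \<le> card (Bc \<union> A)"
    using fB fA by (intro card_mono) auto
  also have "\<dots> \<le> b + card A" unfolding b_def by (rule card_Un_le)
  finally have A1: "n - 2*f \<le> b + card A" using h1 by simp
  have above2: "\<And>k. 1 \<le> k \<Longrightarrow> k \<le> n - b \<Longrightarrow> kth ?P2 k \<le> M"
  proof -
    fix k assume k: "1 \<le> k" "k \<le> n - b"
    have "C \<subseteq> {j. j < n \<and> pos s2 j \<le> M}" using C s2 cM by auto
    then have "card C \<le> card {j. j < n \<and> pos s2 j \<le> M}" by (intro card_mono) auto
    then show "kth ?P2 k \<le> M"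
      using kth_count[of k n "\<lambda>y. y \<le> M" pos s2] k cardC by auto
  qed
  have e2: "kth ?P2 (n - f) \<le> M" using above2[of "n-f"] n bf by simp
  have g2: "kth ?P2 (n - 2*f) \<le> M" using above2[of "n-2*f"] n bf by simp
  have "min M (kth ?P2 (2*f+1)) = M" using d2 e2 g2 unfolding dest_def by (auto simp: max_def)
  then have "\<not> kth ?P2 (2*f+1) < M" by (simp add: min_def split: if_splits)
  then have h2: "\<not> 2*f+1 \<le> card {j. j < n \<and> pos s2 j < M}"
    using kth_count[of "2*f+1" n "\<lambda>y. y < M" pos s2] n by auto
  have "C - Z \<subseteq> {j. j < n \<and> pos s2 j < M}"
    using C s2 cM unfolding Z_def by force
  then have "card (C - Z) \<le> card {j. j < n \<and> pos s2 j < M}" by (intro card_mono) auto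
  moreover have "card (C - Z) = card C - card Z"
    using fC by (intro card_Diff_subset) (auto simp: Z_def)
  ultimately have Z2: "card C - card Z \<le> 2*f" using h2 by simp
  show False using A1 Z2 AZ cardC bf n by linarith
qed

lemma static:
  fixes g :: "real \<Rightarrow> real" and L E :: "nat \<Rightarrow> real" and d :: "nat \<Rightarrow> real"
  assumes t0: "0 \<le> t"
    and mono: "\<forall>k. L k \<le> E k \<and> E k \<le> L (Suc k) \<and> L k < L (Suc k)"
    and unb: "\<forall>T. \<exists>k. T < L k"
    and init: "\<forall>s\<in>{0..L 0}. g s = g 0"
    and cont: "\<forall>k. continuous_on {L k..E k} g"
    and idle: "\<forall>k. \<forall>s\<in>{E k..L (Suc k)}. g s = g (E k)"
    and H: "\<forall>s>t. L 0 \<le> s \<longrightarrow> g s \<in> range d"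
  shows "\<forall>s\<ge>t. g s = g t"
proof -
  have Lm: "\<And>k. L k \<le> L (Suc k)" using mono less_imp_le by blast
  have L0: "L 0 \<le> L k" for k by (rule lift_Suc_mono_le[of L, OF Lm]) simp
  have P: "\<forall>s. t \<le> s \<and> s \<le> L k \<longrightarrow> g s = g t" for k
  proof (induction k)
    case 0
    show ?case
    proof (intro allI impI)
      fix s assume s: "t \<le> s \<and> s \<le> L 0"
      have "g s = g 0" by (rule init[rule_format]) (use s t0 in simp)
      moreover have "g t = g 0" by (rule init[rule_format]) (use s t0 in simp)
      ultimately show "g s = g t" by simp
    qed
  next
    case (Suc k)
    define a where "a = max t (L k)"
    have ga: "g a = g t"
    proof (cases "L k \<le> t")
      case True then show ?thesis by (simp add: a_def)
    next
      case False
      then have "g (L k) = g t" using Suc.IH by (meson less_imp_le not_le order_refl)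
      then show ?thesis using False by (simp add: a_def)
    qed
    have key: "\<forall>u\<in>{a..E k}. g u = g t"
    proof
      fix u assume u: "u \<in> {a..E k}"
      have sub: "g ` {a..E k} \<subseteq> insert (g t) (range d)"
      proof
        fix y assume "y \<in> g ` {a..E k}"
        then obtain v where v: "v \<in> {a..E k}" "y = g v" by blast
        show "y \<in> insert (g t) (range d)"
        proof (cases "v = t")
          case True then show ?thesis using v by simp
        next
          case False
          then have "v > t" using v by (simp add: a_def)
          moreover have "L 0 \<le> v" using v L0[of k] by (simp add: a_def)
          ultimately show ?thesis using H v by blast
        qed
      qed
      have "countable (g ` {a..E k})"
        by (rule countable_subset[OF sub]) simp
      moreover have "continuous_on {a..E k} g"
        using cont by (rule continuous_on_subset[OF spec[of _ k]]) (simp add: a_def)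
      ultimately have "g u = g a"
        using const_countable[of "{a..E k}" g u a] u by simp
      then show "g u = g t" using ga by simp
    qed
    show ?case
    proof (intro allI impI)
      fix s assume s: "t \<le> s \<and> s \<le> L (Suc k)"
      show "g s = g t"
      proof (cases "s \<le> L k")
        case True then show ?thesis using Suc.IH s by blast
      next
        case False
        show ?thesis
        proof (cases "s \<le> E k")
          case True
          then have "s \<in> {a..E k}" using s False by (simp add: a_def)
          then show ?thesis by (rule key[rule_format])
        next
          case False2: False
          have gs: "g s = g (E k)" by (rule idle[rule_format]) (use s False2 in simp)
          show ?thesis
          proof (cases "t \<le> E k")
            case True
            then have "E k \<in> {a..E k}" using mono by (simp add: a_def)
            then have "g (E k) = g t" by (rule key[rule_format])
            then show ?thesis using gs by simp
          next
            case False
            then have "g t = g (E k)" by (intro idle[rule_format]) (use s in simp)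
            then show ?thesis using gs by simp
          qed
        qed
      qed
    qed
  qed
  show ?thesis
  proof (intro allI impI)
    fix s assume "t \<le> s"
    obtain k where "s < L k" using unb by blast
    then show "g s = g t" using P[of k] \<open>t \<le> s\<close> less_imp_le by blast
  qed
qed

lemma ll:
  fixes L :: "nat \<Rightarrow> nat \<Rightarrow> real"
  assumes mono: "\<forall>k. L i k < L i (Suc k)" and unb: "\<forall>T. \<exists>k. T < L i k"
  shows "last_look L i (L i k) = k"
proof -
  obtain b where b: "L i k < L i b" using unb by blast
  have bound: "\<forall>y. L i y \<le> L i k \<longrightarrow> y \<le> b"
    using b mono lift_Suc_mono_less_iff[of "L i"] by (meson less_le_not_le nat_le_linear order.strict_trans2 not_less)
  have "L i (last_look L i (L i k)) \<le> L i k"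
    unfolding last_look_def by (rule GreatestI_nat[of _ k b]) (use bound in auto)
  then have le: "last_look L i (L i k) \<le> k"
    using lift_Suc_mono_less_iff[of "L i"] mono by (meson not_less)
  have "k \<le> last_look L i (L i k)"
    unfolding last_look_def by (rule Greatest_le_nat[of _ k b]) (use bound in auto)
  then show ?thesis using le by simp
qed

lemma ll2:
  fixes L :: "nat \<Rightarrow> nat \<Rightarrow> real"
  assumes mono: "\<forall>k. L i k < L i (Suc k)" and unb: "\<forall>T. \<exists>k. T < L i k" and t: "L i 0 \<le> t"
  shows "L i (last_look L i t) \<le> t"
proof -
  obtain b where b: "t < L i b" using unb by blast
  have bound: "\<forall>y. L i y \<le> t \<longrightarrow> y \<le> b"
    using b mono lift_Suc_mono_less_iff[of "L i"] by (meson le_less_trans less_imp_le_nat not_less)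
  show ?thesis
    unfolding last_look_def by (rule GreatestI_nat[of _ 0 b]) (use bound t in auto)
qed

lemma corda_facts:
  assumes "corda_execution n f B \<delta> pos L E" "i \<in> {..<n} - B"
  shows "0 \<le> L i 0 \<and>
        (\<forall>k. L i k \<le> E i k \<and> E i k \<le> L i (Suc k) \<and> L i k < L i (Suc k)) \<and>
        (\<forall>T. \<exists>k. T < L i k) \<and>
        (\<forall>t \<in> {0..L i 0}. pos t i = pos 0 i) \<and>
        (\<forall>k. continuous_on {L i k..E i k} (\<lambda>t. pos t i) \<and>
           (\<forall>t \<in> {E i k..L i (Suc k)}. pos t i = pos (E i k) i))"
proof -
  have X: "\<delta> i > 0 \<and>
        0 \<le> L i 0 \<and>
        (\<forall>k. L i k \<le> E i k \<and> E i k \<le> L i (Suc k) \<and> L i k < L i (Suc k)) \<and>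
        (\<forall>T. \<exists>k. T < L i k) \<and>
        (\<forall>t \<in> {0..L i 0}. pos t i = pos 0 i) \<and>
        (\<forall>k. let s = pos (L i k) i; d = cycle_dest n f pos L i k in
           continuous_on {L i k..E i k} (\<lambda>t. pos t i) \<and>
           (\<forall>t \<in> {L i k..E i k}. min s d \<le> pos t i \<and> pos t i \<le> max s d) \<and>
           (\<forall>t1 t2. L i k \<le> t1 \<and> t1 \<le> t2 \<and> t2 \<le> E i k \<longrightarrow>
                     \<bar>d - pos t2 i\<bar> \<le> \<bar>d - pos t1 i\<bar>) \<and>
           (pos (E i k) i = d \<or> \<bar>pos (E i k) i - s\<bar> \<ge> \<delta> i) \<and>
           (\<forall>t \<in> {E i k..L i (Suc k)}. pos t i = pos (E i k) i))"
  proof -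
    have "\<forall>i \<in> {..<n} - B.
        \<delta> i > 0 \<and>
        0 \<le> L i 0 \<and>
        (\<forall>k. L i k \<le> E i k \<and> E i k \<le> L i (Suc k) \<and> L i k < L i (Suc k)) \<and>
        (\<forall>T. \<exists>k. T < L i k) \<and>
        (\<forall>t \<in> {0..L i 0}. pos t i = pos 0 i) \<and>
        (\<forall>k. let s = pos (L i k) i; d = cycle_dest n f pos L i k in
           continuous_on {L i k..E i k} (\<lambda>t. pos t i) \<and>
           (\<forall>t \<in> {L i k..E i k}. min s d \<le> pos t i \<and> pos t i \<le> max s d) \<and>
           (\<forall>t1 t2. L i k \<le> t1 \<and> t1 \<le> t2 \<and> t2 \<le> E i k \<longrightarrow>
                     \<bar>d - pos t2 i\<bar> \<le> \<bar>d - pos t1 i\<bar>) \<and>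
           (pos (E i k) i = d \<or> \<bar>pos (E i k) i - s\<bar> \<ge> \<delta> i) \<and>
           (\<forall>t \<in> {E i k..L i (Suc k)}. pos t i = pos (E i k) i))"
      using assms(1) unfolding corda_execution_def by (elim conjE)
    then show ?thesis using assms(2) by (rule bspec)
  qed
  then have a: "0 \<le> L i 0 \<and>
        (\<forall>k. L i k \<le> E i k \<and> E i k \<le> L i (Suc k) \<and> L i k < L i (Suc k)) \<and>
        (\<forall>T. \<exists>k. T < L i k) \<and>
        (\<forall>t \<in> {0..L i 0}. pos t i = pos 0 i)" by (elim conjE) (intro conjI)
  from X have b: "\<forall>k. continuous_on {L i k..E i k} (\<lambda>t. pos t i) \<and>
           (\<forall>t \<in> {E i k..L i (Suc k)}. pos t i = pos (E i k) i)"
    unfolding Let_def by (elim conjE) (intro allI conjI, (drule spec, elim conjE, assumption)+)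
  show ?thesis using a b by (elim conjE) (intro conjI)
qed

theorem lemma7:
  fixes n f :: nat and B :: "nat set" and \<delta> :: "nat \<Rightarrow> real"
    and pos :: "real \<Rightarrow> nat \<Rightarrow> real" and L E :: "nat \<Rightarrow> nat \<Rightarrow> real"
  assumes "n > 5 * f"
    and "corda_execution n f B \<delta> pos L E"
  shows "cautious n f B pos L"
proof -
  define C where "C = {..<n} - B"
  have D0: "B \<subseteq> {..<n} \<and> card B \<le> f" using assms(2) unfolding corda_execution_def
    by (elim conjE) (intro conjI; assumption)
  have BS: "B \<subseteq> {..<n}" and cB: "card B \<le> f" using D0 by simp_all
  have CS: "C \<subseteq> {..<n}" unfolding C_def by auto
  have cb: "card ({..<n} - C) \<le> f" using BS cB unfolding C_def by (simp add: Diff_Diff_Int inf.absorb2)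
  have R: "\<And>i. i \<in> C \<Longrightarrow>
        0 \<le> L i 0 \<and>
        (\<forall>k. L i k \<le> E i k \<and> E i k \<le> L i (Suc k) \<and> L i k < L i (Suc k)) \<and>
        (\<forall>T. \<exists>k. T < L i k) \<and>
        (\<forall>t \<in> {0..L i 0}. pos t i = pos 0 i) \<and>
        (\<forall>k. continuous_on {L i k..E i k} (\<lambda>t. pos t i) \<and>
           (\<forall>t \<in> {E i k..L i (Suc k)}. pos t i = pos (E i k) i))"
    by (rule corda_facts[OF assms(2)]) (simp add: C_def)
  have part1: "\<forall>i \<in> {..<n} - B. \<forall>t. L i 0 \<le> t \<longrightarrow>
        Dest n f pos L i t \<in> {Min (Obs n B pos L i t) .. Max (Obs n B pos L i t)}"
  proof (intro ballI allI impI)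
    fix i t assume i: "i \<in> {..<n} - B" and t: "L i 0 \<le> t"
    have "2*f < n" using assms(1) by simp
    moreover have iC: "i \<in> C" using i unfolding C_def .
    ultimately have "dest n f (snapshot n pos (L i (last_look L i t))) (pos (L i (last_look L i t)) i)
        \<in> {Min (pos (L i (last_look L i t)) ` C) .. Max (pos (L i (last_look L i t)) ` C)}"
      by (intro dest_in_range[OF _ CS cb])
    then show "Dest n f pos L i t \<in> {Min (Obs n B pos L i t) .. Max (Obs n B pos L i t)}"
      unfolding Dest_def Obs_def cycle_dest_def C_def .
  qed
  have part2: "\<forall>t \<ge> 0. (\<exists>j \<in> {..<n} - B. \<exists>j' \<in> {..<n} - B. pos t j \<noteq> pos t j') \<longrightarrow>
        (\<exists>i \<in> {..<n} - B. \<exists>t' > t. L i 0 \<le> t' \<and> Dest n f pos L i t' \<noteq> pos t' i)"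
  proof (intro allI impI)
    fix t :: real
    assume t0: "0 \<le> t" and ex: "\<exists>j \<in> {..<n} - B. \<exists>j' \<in> {..<n} - B. pos t j \<noteq> pos t j'"
    show "\<exists>i \<in> {..<n} - B. \<exists>t' > t. L i 0 \<le> t' \<and> Dest n f pos L i t' \<noteq> pos t' i"
    proof (rule ccontr)
      assume "\<not> ?thesis"
      note neg = this
      have H: "\<forall>i\<in>C. \<forall>t'>t. L i 0 \<le> t' \<longrightarrow> Dest n f pos L i t' = pos t' i"
      proof (intro ballI allI impI)
        fix i t' assume i: "i \<in> C" and tt: "t < t'" and Lt: "L i 0 \<le> t'"
        show "Dest n f pos L i t' = pos t' i"
        proof (rule ccontr)
          assume ne: "Dest n f pos L i t' \<noteq> pos t' i"
          have "i \<in> {..<n} - B" using i unfolding C_def .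
          then have "\<exists>i \<in> {..<n} - B. \<exists>t' > t. L i 0 \<le> t' \<and> Dest n f pos L i t' \<noteq> pos t' i"
            using tt Lt ne by (intro bexI[where x=i] exI[where x=t'] conjI)
          then show False using neg by (rule notE[rotated])
        qed
      qed
      have st: "\<forall>s\<ge>t. pos s i = pos t i" if i: "i \<in> C" for i
      proof -
        have Ri: "0 \<le> L i 0 \<and>
          (\<forall>k. L i k \<le> E i k \<and> E i k \<le> L i (Suc k) \<and> L i k < L i (Suc k)) \<and>
          (\<forall>T. \<exists>k. T < L i k) \<and>
          (\<forall>t \<in> {0..L i 0}. pos t i = pos 0 i) \<and>
          (\<forall>k. continuous_on {L i k..E i k} (\<lambda>t. pos t i) \<and>
             (\<forall>t \<in> {E i k..L i (Suc k)}. pos t i = pos (E i k) i))" using R[OF i] .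
        have Hi: "\<forall>s>t. L i 0 \<le> s \<longrightarrow> pos s i \<in> range (cycle_dest n f pos L i)"
          proof (intro allI impI)
            fix s assume s: "t < s" "L i 0 \<le> s"
            have "Dest n f pos L i s = pos s i" by (rule H[rule_format, OF i s])
            then show "pos s i \<in> range (cycle_dest n f pos L i)" unfolding Dest_def by (metis rangeI)
          qed
        show ?thesis
          by (rule static[of t "L i" "E i" "\<lambda>s. pos s i" "cycle_dest n f pos L i", OF t0 _ _ _ _ _ Hi])
            (use Ri in blast)+
      qed
      define c where "c = (\<lambda>j. pos t j)"
      have fC: "finite C" using CS finite_subset by blast
      obtain j j' where jj: "j \<in> C" "j' \<in> C" "c j \<noteq> c j'" using ex unfolding C_def c_def by blast
      define m where "m = Min (c ` C)"
      define M where "M = Max (c ` C)"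
      have mle: "m \<le> c j" "m \<le> c j'" "c j \<le> M" "c j' \<le> M" unfolding m_def M_def using fC jj by auto
      then have mM: "m < M" using jj by linarith
      have "m \<in> c ` C" unfolding m_def using fC jj(1) by (intro Min_in) auto
      then obtain i1 where i1: "i1 \<in> C" "c i1 = m" by (elim imageE) simp
      have "M \<in> c ` C" unfolding M_def using fC jj(1) by (intro Max_in) auto
      then obtain i2 where i2: "i2 \<in> C" "c i2 = M" by (elim imageE) simp
      have dd: "dest n f (snapshot n pos (L i k)) (c i) = c i" if i: "i \<in> C" and k: "t < L i k" for i k
      proof -
        have Ri: "(\<forall>k. L i k < L i (Suc k)) \<and> (\<forall>T. \<exists>k. T < L i k)" using R[OF i] by blast
        have Lm: "\<And>k. L i k \<le> L i (Suc k)" using Ri less_imp_le by blast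
        have "L i 0 \<le> L i k" by (rule lift_Suc_mono_le[of "L i", OF Lm]) simp
        then have "Dest n f pos L i (L i k) = pos (L i k) i" by (rule H[rule_format, OF i k])
        moreover have "last_look L i (L i k) = k" using ll[of L i k] Ri by blast
        moreover have p: "pos (L i k) i = pos t i" by (rule st[OF i, rule_format, OF less_imp_le[OF k]])
        ultimately have "cycle_dest n f pos L i k = pos t i" unfolding Dest_def by simp
        then show ?thesis unfolding cycle_dest_def c_def p .
      qed
      have "\<exists>k. t < L i1 k" using R[OF i1(1)] by blast
      then obtain k1 where k1: "t < L i1 k1" by blast
      have "\<exists>k. t < L i2 k" using R[OF i2(1)] by blast
      then obtain k2 where k2: "t < L i2 k2" by blast
      have s1: "\<forall>j\<in>C. pos (L i1 k1) j = c j" unfolding c_def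
        proof
          fix j assume "j \<in> C" show "pos (L i1 k1) j = pos t j" by (rule st[OF \<open>j \<in> C\<close>, rule_format, OF less_imp_le[OF k1]])
        qed
      have s2: "\<forall>j\<in>C. pos (L i2 k2) j = c j" unfolding c_def
        proof
          fix j assume "j \<in> C" show "pos (L i2 k2) j = pos t j" by (rule st[OF \<open>j \<in> C\<close>, rule_format, OF less_imp_le[OF k2]])
        qed
      have d1: "dest n f (snapshot n pos (L i1 k1)) m = m"
        using dd[OF i1(1) k1] unfolding i1(2) .
      have d2: "dest n f (snapshot n pos (L i2 k2)) M = M"
        using dd[OF i2(1) k2] unfolding i2(2) .
      show False
        by (rule counting[OF assms(1) CS cb s1 s2 m_def M_def mM i1 i2 d1 d2])
    qed
  qed
  show ?thesis unfolding cautious_def using part1 part2 by (rule conjI)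
qed

end
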